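(* Let $G$ be a finitely generated group and $(X,\mathcal{U})$ a uniform space. If $\Phi\in Act(G,X)$ is topologically stable, then it is $\mu$-topologically stable for any non-atomic Borel measure $\mu$ on $X$.
   Context: $D[x]=\{y:(x,y)\in D\}$. $Act(G,X)$: maps $\Phi:G\times X\to X$ with each $\Phi_g$ a uniform equivalence, $\Phi_e=\mathrm{id}$, $\Phi_{g_1g_2}=\Phi_{g_1}\circ\Phi_{g_2}$. Generating sets are finite symmetric. Non-atomic: $\mu(\{x\})=0$ for all $x$. $\Phi$ is topologically stable if for some generating set $S$: for every $E\in\mathcal{U}$ there is $D\in\mathcal{U}$ such that whenever $\Psi\in Act(G,X)$ satisfies $(\Psi_s(x),\Phi_s(x))\in D$ for all $x\in X,s\in S$, there is a continuous $f:X\to X$ with $\Phi_g\circ f=f\circ\Psi_g$ for all $g$ and $(x,f(x))\in E$ for all $x$. For set-valued $H:X\to\mathcal{P}(X)$: $Dom(H)=\{x:H(x)\neq\emptyset\}$; $(Id,H)\in E$ means $H(x)\subset E[x]$ for all $x$; $H$ is upper semi-continuous if for each $x\in Dom(H)$ and open $O\supset H(x)$ there is $D\in\mathcal{U}$ with $H(y)\subset O$ whenever $(x,y)\in D$. $\Phi$ is $\mu$-topologically stable if for some generating set $S$: for every $E\in\mathcal{U}$ there is $D\in\mathcal{U}$ such that whenever $\Psi\in Act(G,X)$ satisfies $(\Psi_s(x),\Phi_s(x))\in D$ for all $x,s\in S$, there is an upper semi-continuous compact-valued $H$ with measurable domain such that $\mu(X\setminus Dom(H))=0$, $\mu(H(x))=0$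 for all $x$, $(Id,H)\in E$, and $\Phi_g(H(x))=H(\Psi_g(x))$ for all $g,x$. *)

theory Defs
  imports "HOL-Analysis.Analysis" "HOL-Algebra.Generated_Groups"
begin

definition entourage :: "('a::uniform_space \<times> 'a) set \<Rightarrow> bool" where
  "entourage E \<longleftrightarrow> eventually (\<lambda>p. p \<in> E) uniformity"

definition uniform_equiv :: "('a::uniform_space \<Rightarrow> 'a) \<Rightarrow> bool" where
  "uniform_equiv f \<longleftrightarrow> bij f \<and> uniformly_continuous_on UNIV f \<and> uniformly_continuous_on UNIV (inv_into UNIV f)"

definition Act :: "('g, 'b) monoid_scheme \<Rightarrow> ('g \<Rightarrow> 'a::uniform_space \<Rightarrow> 'a) \<Rightarrow> bool" where
  "Act G \<Phi> \<longleftrightarrow>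
     (\<forall>g\<in>carrier G. uniform_equiv (\<Phi> g)) \<and>
     \<Phi> \<one>\<^bsub>G\<^esub> = id \<and>
     (\<forall>g1\<in>carrier G. \<forall>g2\<in>carrier G. \<Phi> (g1 \<otimes>\<^bsub>G\<^esub> g2) = \<Phi> g1 \<circ> \<Phi> g2)"

definition gen_set :: "('g, 'b) monoid_scheme \<Rightarrow> 'g set \<Rightarrow> bool" where
  "gen_set G S \<longleftrightarrow> finite S \<and> S \<subseteq> carrier G \<and> (\<forall>s\<in>S. inv\<^bsub>G\<^esub> s \<in> S) \<and> generate G S = carrier G"

definition finitely_generated :: "('g, 'b) monoid_scheme \<Rightarrow> bool" where
  "finitely_generated G \<longleftrightarrow> (\<exists>S. finite S \<and> S \<subseteq> carrier G \<and> generate G S = carrier G)"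

definition topologically_stable :: "('g, 'b) monoid_scheme \<Rightarrow> ('g \<Rightarrow> 'a::uniform_space \<Rightarrow> 'a) \<Rightarrow> bool" where
  "topologically_stable G \<Phi> \<longleftrightarrow>
     (\<exists>S. gen_set G S \<and>
       (\<forall>E. entourage E \<longrightarrow>
         (\<exists>D. entourage D \<and>
           (\<forall>\<Psi>. Act G \<Psi> \<and> (\<forall>x. \<forall>s\<in>S. (\<Psi> s x, \<Phi> s x) \<in> D) \<longrightarrow>
             (\<exists>f. continuous_on UNIV f \<and>
                  (\<forall>g\<in>carrier G. \<Phi> g \<circ> f = f \<circ> \<Psi> g) \<and>
                  (\<forall>x. (x, f x) \<in> E))))))"

definition Dom :: "('a \<Rightarrow> 'c set) \<Rightarrow> 'a set" where
  "Dom H = {x. H x \<noteq> {}}"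

definition usc :: "('a::uniform_space \<Rightarrow> 'a set) \<Rightarrow> bool" where
  "usc H \<longleftrightarrow> (\<forall>x\<in>Dom H. \<forall>U. open U \<and> H x \<subseteq> U \<longrightarrow>
                 (\<exists>D. entourage D \<and> (\<forall>y. (x, y) \<in> D \<longrightarrow> H y \<subseteq> U)))"

definition Id_H_in :: "('a \<Rightarrow> 'a set) \<Rightarrow> ('a \<times> 'a) set \<Rightarrow> bool" where
  "Id_H_in H E \<longleftrightarrow> (\<forall>x. H x \<subseteq> {y. (x, y) \<in> E})"

definition nonatomic :: "'a measure \<Rightarrow> bool" where
  "nonatomic M \<longleftrightarrow> (\<forall>x. {x} \<in> null_sets M)"

definition mu_topologically_stable ::
  "'a::uniform_space measure \<Rightarrow> ('g, 'b) monoid_scheme \<Rightarrow> ('g \<Rightarrow> 'a \<Rightarrow> 'a) \<Rightarrow> bool" where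
  "mu_topologically_stable M G \<Phi> \<longleftrightarrow>
     (\<exists>S. gen_set G S \<and>
       (\<forall>E. entourage E \<longrightarrow>
         (\<exists>D. entourage D \<and>
           (\<forall>\<Psi>. Act G \<Psi> \<and> (\<forall>x. \<forall>s\<in>S. (\<Psi> s x, \<Phi> s x) \<in> D) \<longrightarrow>
             (\<exists>H. usc H \<and> (\<forall>x. compact (H x)) \<and>
                  Dom H \<in> sets M \<and> UNIV - Dom H \<in> null_sets M \<and>
                  (\<forall>x. H x \<in> null_sets M) \<and>
                  Id_H_in H E \<and>
                  (\<forall>g\<in>carrier G. \<forall>x. \<Phi> g ` H x = H (\<Psi> g x)))))))"

end

theory Submission
  imports Defs
begin

lemma usc_single:
  fixes f :: "'a::uniform_space \<Rightarrow> 'a"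
  assumes "continuous_on UNIV f"
  shows "usc (\<lambda>x. {f x})"
  unfolding usc_def
proof (intro ballI allI impI)
  fix x U assume "open U \<and> {f x} \<subseteq> U"
  hence U: "open U" "f x \<in> U" by auto
  have o: "open (f -` U)" using assms U(1) by (simp add: open_vimage)
  have x: "x \<in> f -` U" using U by simp
  have "\<forall>y\<in>f -` U. \<forall>\<^sub>F (x',z) in uniformity. x' = y \<longrightarrow> z \<in> f -` U"
    using o by (simp only: open_uniformity)
  hence ev: "\<forall>\<^sub>F (x',z) in uniformity. x' = x \<longrightarrow> z \<in> f -` U"
    using x by (rule bspec)
  have "\<forall>\<^sub>F p in uniformity. p \<in> {(x',z). x' = x \<longrightarrow> z \<in> f -` U}"
    using ev by (rule eventually_mono) auto
  hence "entourage {(x',z). x' = x \<longrightarrow> z \<in> f -` U}" by (simp only: entourage_def)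
  thus "\<exists>D. entourage D \<and> (\<forall>y. (x, y) \<in> D \<longrightarrow> {f y} \<subseteq> U)" by auto
qed

theorem theorem3p11:
  fixes G :: "('g, 'b) monoid_scheme"
    and \<Phi> :: "'g \<Rightarrow> 'a::uniform_space \<Rightarrow> 'a"
    and M :: "'a measure"
  assumes "group G"
    and "finitely_generated G"
    and "Act G \<Phi>"
    and "topologically_stable G \<Phi>"
    and "sets M = sets borel"
    and "nonatomic M"
  shows "mu_topologically_stable M G \<Phi>"
proof -
  have sp: "space M = UNIV" using sets_eq_imp_space_eq[OF assms(5)] by simp
  have dom: "Dom (\<lambda>x. {y x}) = UNIV" for y :: "'a \<Rightarrow> 'a" by (auto simp: Dom_def)
  have top: "UNIV \<in> sets M" using sets.top[of M] sp by simp
  obtain S where S: "gen_set G S" and st: "\<forall>E. entourage E \<longrightarrow> (\<exists>D. entourage D \<and>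
           (\<forall>\<Psi>. Act G \<Psi> \<and> (\<forall>x. \<forall>s\<in>S. (\<Psi> s x, \<Phi> s x) \<in> D) \<longrightarrow>
             (\<exists>f. continuous_on UNIV f \<and>
                  (\<forall>g\<in>carrier G. \<Phi> g \<circ> f = f \<circ> \<Psi> g) \<and>
                  (\<forall>x. (x, f x) \<in> E))))"
    using assms(4) unfolding topologically_stable_def by (elim exE conjE) (rule that)
  show ?thesis
    unfolding mu_topologically_stable_def
  proof (intro exI[of _ S] conjI allI impI)
    show "gen_set G S" by (rule S)
    fix E :: "('a \<times> 'a) set" assume E: "entourage E"
    from st[rule_format, OF E] obtain D where D: "entourage D" and DD: "\<forall>\<Psi>. Act G \<Psi> \<and> (\<forall>x. \<forall>s\<in>S. (\<Psi> s x, \<Phi> s x) \<in> D) \<longrightarrow>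
             (\<exists>f. continuous_on UNIV f \<and>
                  (\<forall>g\<in>carrier G. \<Phi> g \<circ> f = f \<circ> \<Psi> g) \<and>
                  (\<forall>x. (x, f x) \<in> E))" by (elim exE conjE) (rule that)
    show "\<exists>D. entourage D \<and>
           (\<forall>\<Psi>. Act G \<Psi> \<and> (\<forall>x. \<forall>s\<in>S. (\<Psi> s x, \<Phi> s x) \<in> D) \<longrightarrow>
             (\<exists>H. usc H \<and> (\<forall>x. compact (H x)) \<and>
                  Dom H \<in> sets M \<and> UNIV - Dom H \<in> null_sets M \<and>
                  (\<forall>x. H x \<in> null_sets M) \<and>
                  Id_H_in H E \<and>
                  (\<forall>g\<in>carrier G. \<forall>x. \<Phi> g ` H x = H (\<Psi> g x))))"
    proof (intro exI[of _ D] conjI allI impI)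
      show "entourage D" by (rule D)
      fix \<Psi> assume asm: "Act G \<Psi> \<and> (\<forall>x. \<forall>s\<in>S. (\<Psi> s x, \<Phi> s x) \<in> D)"
      from mp[OF spec[OF DD, of \<Psi>] asm] obtain f where f: "continuous_on UNIV f"
        "\<forall>g\<in>carrier G. \<Phi> g \<circ> f = f \<circ> \<Psi> g" "\<forall>x. (x, f x) \<in> E" by (elim exE conjE) (rule that)
      show "\<exists>H. usc H \<and> (\<forall>x. compact (H x)) \<and>
                  Dom H \<in> sets M \<and> UNIV - Dom H \<in> null_sets M \<and>
                  (\<forall>x. H x \<in> null_sets M) \<and>
                  Id_H_in H E \<and>
                  (\<forall>g\<in>carrier G. \<forall>x. \<Phi> g ` H x = H (\<Psi> g x))"
      proof (intro exI[of _ "\<lambda>x. {f x}"] conjI allI ballI)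
        show "usc (\<lambda>x. {f x})" by (rule usc_single[OF f(1)])
        show "compact {f x}" for x by simp
        show "Dom (\<lambda>x. {f x}) \<in> sets M" using top dom by simp
        show "UNIV - Dom (\<lambda>x. {f x}) \<in> null_sets M" using dom by simp
        show "{f x} \<in> null_sets M" for x using assms(6) by (simp add: nonatomic_def)
        show "Id_H_in (\<lambda>x. {f x}) E" using f(3) by (simp add: Id_H_in_def)
        show "\<Phi> g ` {f x} = {f (\<Psi> g x)}" if "g \<in> carrier G" for g x
        proof -
          have "(\<Phi> g \<circ> f) x = (f \<circ> \<Psi> g) x" using f(2) that by simp
          thus ?thesis by simp
        qed
      qed
    qed
  qed
qed

end
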